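(* For $n=0,1,2,\ldots$ let $R_n=\sum_{k=0}^n\binom{n}{k}\binom{n+k}{k}\frac{1}{2k-1}$. Then $\lim_{n\to\infty}\frac{\sqrt[n+1]{R_{n+1}}}{\sqrt[n]{R_n}}=1$. *)

theory Defs
  imports "HOL-Analysis.Analysis"
begin

definition R :: "nat \<Rightarrow> real" where
  "R n = (\<Sum>k=0..n. real (n choose k) * real ((n + k) choose k) * (1 / (2 * real k - 1)))"

end

theory Submission
  imports Defs
begin

definition t :: "nat \<Rightarrow> nat \<Rightarrow> real" where
  "t n k = real (n choose k) * real ((n + k) choose k) * (1 / (2 * real k - 1))"

lemma R_t: "R n = (\<Sum>k=0..n. t n k)"
  unfolding R_def t_def by simp

lemma t_nonneg: "k \<ge> 1 \<Longrightarrow> t n k \<ge> 0"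
  unfolding t_def by simp

lemma t0: "t n 0 = -1"
  unfolding t_def by simp

lemma t_mono: "k \<ge> 1 \<Longrightarrow> t n k \<le> t (Suc n) k"
proof -
  assume k: "k \<ge> 1"
  have a: "real (n choose k) \<le> real (Suc n choose k)"
    using binomial_right_mono[of n "Suc n" k] by simp
  have b: "real ((n+k) choose k) \<le> real ((Suc n + k) choose k)"
    using binomial_right_mono[of "n+k" "Suc n + k" k] by simp
  have c: "0 \<le> 1 / (2 * real k - 1)" using k by simp
  show ?thesis unfolding t_def
    by (intro mult_right_mono mult_mono a b c) auto
qed

lemma t_ratio:
  assumes "k \<le> n"
  shows "t (Suc n) k * real (Suc n - k) = t n k * real (Suc n + k)"
proof -
  have A: "real (Suc n - k) * real (Suc n choose k) = real (Suc n) * real (n choose k)"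
    using binomial_absorb_comp[of "Suc n" k] by (metis diff_Suc_1 of_nat_mult)
  have B0: "(Suc n + k - k) * (Suc n + k choose k) = (Suc n + k) * ((Suc n + k - 1) choose k)"
    by (rule binomial_absorb_comp)
  have B: "real (Suc n) * real (Suc n + k choose k) = real (Suc n + k) * real (n + k choose k)"
    using B0 by (metis add_diff_cancel_right' diff_Suc_1 of_nat_mult plus_nat.simps(2))
  have "t (Suc n) k * real (Suc n - k) * real (Suc n)
       = (real (Suc n - k) * real (Suc n choose k)) * (real (Suc n) * real (Suc n + k choose k))
          * (1 / (2 * real k - 1))"
    unfolding t_def by (simp add: mult_ac)
  also have "\<dots> = (real (Suc n) * real (n choose k)) * (real (Suc n + k) * real (n + k choose k))
          * (1 / (2 * real k - 1))"
    by (simp only: A B)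
  also have "\<dots> = t n k * real (Suc n + k) * real (Suc n)"
    unfolding t_def by (simp add: mult_ac)
  finally show ?thesis by simp
qed

lemma t_upper:
  assumes "k \<le> n" "k \<ge> 1"
  shows "t (Suc n) k \<le> (2 * real n + 1) * t n k"
proof -
  have p: "real (Suc n - k) \<ge> 1" using assms by simp
  have nn: "t n k \<ge> 0" using assms t_nonneg by simp
  have "t (Suc n) k \<le> t (Suc n) k * real (Suc n - k)"
    using p t_nonneg[of k "Suc n"] assms by (simp add: mult_le_cancel_left1)
  also have "\<dots> = t n k * real (Suc n + k)" using t_ratio assms by simp
  also have "\<dots> \<le> t n k * (2 * real n + 1)"
    using nn assms by (intro mult_left_mono) auto
  finally show ?thesis by (simp add: mult.commute)
qed

lemma central_step: "(2*n+2 choose (n+1)) \<le> 4 * (2*n choose n)"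
proof -
  have m1: "2*n choose k \<le> 2*n choose n" for k by (rule binomial_maximum')
  have e1: "2*n+2 choose (n+1) = (2*n+1 choose n) + (2*n+1 choose (n+1))"
    using binomial_Suc_Suc[of "2*n+1" n] by simp
  have e2: "2*n+1 choose (n+1) = (2*n choose n) + (2*n choose (n+1))"
    using binomial_Suc_Suc[of "2*n" n] by simp
  have e3: "2*n+1 choose n \<le> 2 * (2*n choose n)"
  proof (cases n)
    case 0 then show ?thesis by simp
  next
    case (Suc m)
    have "2*n+1 choose n = (2*n choose m) + (2*n choose n)"
      using binomial_Suc_Suc[of "2*n" m] Suc by simp
    then show ?thesis using m1[of m] by simp
  qed
  show ?thesis using e1 e2 e3 m1[of "n+1"] by simp
qed

lemma t_diag:
  assumes "n \<ge> 1"
  shows "t (Suc n) (Suc n) \<le> 4 * t n n"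
proof -
  have c: "real (2*n+2 choose (n+1)) \<le> 4 * real (2*n choose n)"
    using central_step[of n] of_nat_le_iff by fastforce
  have d: "1 / (2 * real (Suc n) - 1) \<le> 1 / (2 * real n - 1)"
    using assms by (intro divide_left_mono) auto
  have e1: "Suc n + Suc n = 2*n+2" by simp
  have e2: "n + n = 2*n" by simp
  have "t (Suc n) (Suc n) = real (2*n+2 choose (n+1)) * (1 / (2 * real (Suc n) - 1))"
    unfolding t_def binomial_n_n e1 by (simp del: binomial_Suc_Suc)
  also have "\<dots> \<le> (4 * real (2*n choose n)) * (1 / (2 * real n - 1))"
    using assms by (intro mult_mono c d) auto
  also have "\<dots> = 4 * t n n" unfolding t_def binomial_n_n e2 by (simp del: binomial_Suc_Suc)
  finally show ?thesis .
qed

lemma R_split: "R n = -1 + (\<Sum>k=1..n. t n k)"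
  unfolding R_t by (simp add: sum.atLeast_Suc_atMost t0)

lemma R_mono: "R n \<le> R (Suc n)"
proof -
  have "(\<Sum>k=1..n. t n k) \<le> (\<Sum>k=1..n. t (Suc n) k)"
    by (intro sum_mono t_mono) auto
  also have "\<dots> \<le> (\<Sum>k=1..Suc n. t (Suc n) k)"
    using t_nonneg[of "Suc n" "Suc n"] by simp
  finally show ?thesis unfolding R_split by simp
qed

lemma R1: "R 1 = 1"
  unfolding R_def by simp

lemma R_ge1: "n \<ge> 1 \<Longrightarrow> R n \<ge> 1"
proof (induction n rule: dec_induct)
  case base then show ?case using R1 by simp
next
  case (step m) then show ?case using R_mono[of m] by simp
qed

lemma R_upper:
  assumes "n \<ge> 1"
  shows "R (Suc n) \<le> (4 * real n + 10) * R n"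
proof -
  let ?S = "\<Sum>k=1..n. t n k"
  have S: "?S = R n + 1" using R_split by simp
  have Snn: "t n n \<le> ?S"
    using assms by (intro member_le_sum t_nonneg) auto
  have "(\<Sum>k=1..n. t (Suc n) k) \<le> (\<Sum>k=1..n. (2 * real n + 1) * t n k)"
    by (intro sum_mono t_upper) auto
  also have "\<dots> = (2 * real n + 1) * ?S" by (simp add: sum_distrib_left)
  finally have a: "(\<Sum>k=1..n. t (Suc n) k) \<le> (2 * real n + 1) * ?S" .
  have "R (Suc n) = -1 + (\<Sum>k=1..n. t (Suc n) k) + t (Suc n) (Suc n)"
    unfolding R_split by simp
  also have "\<dots> \<le> -1 + (2 * real n + 1) * ?S + 4 * ?S"
    using a t_diag[OF assms] Snn by linarith
  also have "\<dots> \<le> (2 * real n + 5) * (R n + 1)" unfolding S by (simp add: algebra_simps)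
  also have "\<dots> \<le> (2 * real n + 5) * (2 * R n)"
    using R_ge1[OF assms] by (intro mult_left_mono) auto
  finally show ?thesis by (simp add: algebra_simps)
qed


lemma lnbound_tendsto: "(\<lambda>n. 10 * (ln (4 * real n + 10) / (4 * real n + 10))) \<longlonglongrightarrow> 0"
proof -
  have f: "filterlim (\<lambda>n. 4 * real n + 10) at_top sequentially"
    by (rule filterlim_at_top_mono[OF filterlim_real_sequentially]) auto
  have "(\<lambda>n. ln (4 * real n + 10) / (4 * real n + 10)) \<longlonglongrightarrow> 0"
    using filterlim_compose[OF ln_x_over_x_tendsto_0 f] by (simp add: o_def)
  then show ?thesis using tendsto_mult_right_zero by blast
qed

lemma frac_helper: "(x::real) > 0 \<Longrightarrow> r / (x+1) + r / (x * (x+1)) = r / x"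
proof -
  assume x: "x > 0"
  have a: "r / (x+1) = r * x / (x * (x+1))" using x by simp
  have "r * x / (x * (x+1)) + r / (x * (x+1)) = (r * x + r) / (x * (x+1))"
    by (rule add_divide_distrib[symmetric])
  also have "\<dots> = r * (x+1) / (x * (x+1))" by (simp add: algebra_simps)
  also have "\<dots> = r / x" using x by simp
  finally show ?thesis using a by simp
qed

theorem theorem4p4:
  shows "(\<lambda>n. root (n + 1) (R (n + 1)) / root n (R n)) \<longlonglongrightarrow> 1"
proof -
  define r where "r n = ln (R n)" for n
  define L where "L n = ln (4 * real n + 10)" for n
  define d where "d n = r (Suc n) / real (Suc n) - r n / real n" for n
  have Lnn: "L n \<ge> 0" for n unfolding L_def by simp
  have rnn: "n \<ge> 1 \<Longrightarrow> r n \<ge> 0" for n unfolding r_def using R_ge1 by simp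
  have rinc: "n \<ge> 1 \<Longrightarrow> r n \<le> r (Suc n)" for n
  proof -
    assume n: "n \<ge> 1"
    have "R n > 0" using R_ge1[OF n] by simp
    moreover have "R (Suc n) > 0" using R_ge1[of "Suc n"] by simp
    ultimately show ?thesis unfolding r_def using R_mono[of n] by simp
  qed
  have rstep: "n \<ge> 1 \<Longrightarrow> r (Suc n) \<le> r n + L n" for n
  proof -
    assume n: "n \<ge> 1"
    have p: "R n > 0" using R_ge1[OF n] by simp
    have "r (Suc n) \<le> ln ((4 * real n + 10) * R n)"
      unfolding r_def using R_upper[OF n] R_ge1[of "Suc n"] by simp
    also have "\<dots> = L n + r n" unfolding L_def r_def using p by (simp add: ln_mult)
    finally show ?thesis by simp
  qed
  have rbound: "n \<ge> 1 \<Longrightarrow> r n \<le> real n * L n" for n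
  proof (induction n rule: dec_induct)
    case base then show ?case unfolding r_def using R1 Lnn[of 1] by simp
  next
    case (step m)
    have "L m \<le> L (Suc m)" unfolding L_def by simp
    then have "real (Suc m) * L m \<le> real (Suc m) * L (Suc m)"
      by (intro mult_left_mono) auto
    then show ?case using rstep[OF step(1)] step(3) by (simp add: algebra_simps)
  qed
  have dbound: "n \<ge> 1 \<Longrightarrow> norm (d n) \<le> 10 * (ln (4 * real n + 10) / (4 * real n + 10))" for n
  proof -
    assume n: "n \<ge> 1"
    have d_eq: "d n = (r (Suc n) - r n) / real (Suc n) - r n / (real n * real (Suc n))"
    proof -
      have np: "real n > 0" using n by simp
      have "r n / real n = r n / real (Suc n) + r n / (real n * real (Suc n))"
        using frac_helper[OF np, of "r n"] by (simp add: add.commute)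
      then show ?thesis unfolding d_def by (simp add: diff_divide_distrib)
    qed
    have a1: "0 \<le> (r (Suc n) - r n) / real (Suc n)" using rinc[OF n] by simp
    have a2: "(r (Suc n) - r n) / real (Suc n) \<le> L n / real (Suc n)"
      using rstep[OF n] by (intro divide_right_mono) auto
    have b1: "0 \<le> r n / (real n * real (Suc n))" using rnn[OF n] by simp
    have b2: "r n / (real n * real (Suc n)) \<le> (real n * L n) / (real n * real (Suc n))"
      using rbound[OF n] by (intro divide_right_mono) auto
    have b3: "(real n * L n) / (real n * real (Suc n)) = L n / real (Suc n)" using n by simp
    have "norm (d n) \<le> L n / real (Suc n)" using a1 a2 b1 b2 b3 unfolding d_eq by auto
    also have "\<dots> \<le> 10 * (L n / (4 * real n + 10))"
      using Lnn[of n] by (simp add: field_simps)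
    finally show ?thesis unfolding L_def .
  qed
  have "d \<longlonglongrightarrow> 0"
    by (rule Lim_null_comparison[OF _ lnbound_tendsto])
       (use dbound in \<open>auto simp: eventually_sequentially\<close>)
  then have e: "(\<lambda>n. exp (d n)) \<longlonglongrightarrow> 1"
    using tendsto_exp[of d 0] by simp
  have eq: "exp (d n) = root (n + 1) (R (n + 1)) / root n (R n)" if n: "n \<ge> 1" for n
  proof -
    have p1: "R n > 0" using R_ge1[OF n] by simp
    have p2: "R (Suc n) > 0" using R_ge1[of "Suc n"] by simp
    have "root n (R n) = exp (r n / real n)"
      unfolding r_def using n p1 by (metis exp_ln ln_root real_root_gt_zero less_le_trans zero_less_one)
    moreover have "root (Suc n) (R (Suc n)) = exp (r (Suc n) / real (Suc n))"
      unfolding r_def using p2 by (metis exp_ln ln_root real_root_gt_zero zero_less_Suc)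
    ultimately show ?thesis unfolding d_def by (simp add: exp_diff)
  qed
  show ?thesis
    by (rule Lim_transform_eventually[OF e]) (use eq in \<open>auto simp: eventually_sequentially\<close>)
qed

end
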